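(* If a function $f$ is computable by a $T(n)$-time Turing machine, then there is a $(T(n),T(n))$-time TM-TLM that computes $f$, i.e. a TM-TLM with time complexity $O(T(n))$ and IO complexity $O(T(n))$.
   Context: A Turing machine with two-level memory (TM-TLM) with main memory size $M$ has three tapes: a main memory tape consisting of $M$ cells, an unbounded external memory tape, and an address tape for the external memory. It has a finite set of states, input alphabet $\Sigma$, tape alphabet $\Gamma\supseteq\Sigma$ containing a blank, an accepting state, and a transition function $\delta: Q\times\Gamma\to Q\times\Gamma\times\{L,S,R\}$ acting on the main memory tape. There are special read states and write states. On entering a read state the machine writes an address $addr$ on the address tape and the content of the main memory cell under the head is replaced by the content of external cell $addr$; on entering a write state it writes $addr$ and the content of external cell $addr$ is replaced by the content of the main memory cell under the head. Each such Read/Write is an IO operation taking unit time; afterwards the head may move L, R or stay. For input $x$, the time is the number of transitions other than Read/Write operations, and the IO time is the number of Read/Write operations. A $(T(n),IO(n))$-time TM-TLM has time complexity $O(T(n))$ and IO complexity $O(IO(n))$ (complexity $O(T(n))$ meaning the measure is $O(T(n))$ for almost all $n$ and all inputs of length $n$). *)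

theory Defs
  imports Main
begin

datatype move = L | S | R

fun mv :: "move \<Rightarrow> nat \<Rightarrow> nat" where
  "mv L h = h - 1"
| "mv S h = h"
| "mv R h = Suc h"

definition tape_holds :: "'g \<Rightarrow> ('a \<Rightarrow> 'g) \<Rightarrow> (nat \<Rightarrow> 'g) \<Rightarrow> 'a list \<Rightarrow> bool" where
  "tape_holds blank emb tp y \<longleftrightarrow>
     (\<forall>i<length y. tp i = emb (y ! i)) \<and> tp (length y) = blank"

definition input_tape :: "'g \<Rightarrow> ('a \<Rightarrow> 'g) \<Rightarrow> 'a list \<Rightarrow> nat \<Rightarrow> 'g" where
  "input_tape blank emb x = (\<lambda>i. if i < length x then emb (x ! i) else blank)"

record ('q, 'g, 'a) tm =
  tm_start :: 'q
  tm_final :: "'q set"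
  tm_blank :: 'g
  tm_emb   :: "'a \<Rightarrow> 'g"
  tm_delta :: "'q \<Rightarrow> 'g \<Rightarrow> 'q \<times> 'g \<times> move"

definition tm_wf :: "('q, 'g, 'a) tm \<Rightarrow> bool" where
  "tm_wf A \<longleftrightarrow> inj (tm_emb A) \<and> tm_blank A \<notin> range (tm_emb A)"

text \<open>Configuration: (state, tape, head position, number of steps so far).
  Final states are fixed points.\<close>
type_synonym ('q, 'g) tm_conf = "'q \<times> (nat \<Rightarrow> 'g) \<times> nat \<times> nat"

definition tm_step :: "('q, 'g, 'a) tm \<Rightarrow> ('q, 'g) tm_conf \<Rightarrow> ('q, 'g) tm_conf" where
  "tm_step A c = (case c of (q, tp, h, t) \<Rightarrow>
     if q \<in> tm_final A then (q, tp, h, t)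
     else (case tm_delta A q (tp h) of (q', a, d) \<Rightarrow> (q', tp(h := a), mv d h, Suc t)))"

definition tm_init :: "('q, 'g, 'a) tm \<Rightarrow> 'a list \<Rightarrow> ('q, 'g) tm_conf" where
  "tm_init A x = (tm_start A, input_tape (tm_blank A) (tm_emb A) x, 0, 0)"

definition tm_run :: "('q, 'g, 'a) tm \<Rightarrow> 'a list \<Rightarrow> nat \<Rightarrow> ('q, 'g) tm_conf" where
  "tm_run A x k = (tm_step A ^^ k) (tm_init A x)"

definition tm_halted :: "('q, 'g, 'a) tm \<Rightarrow> 'a list \<Rightarrow> nat \<Rightarrow> bool" where
  "tm_halted A x k \<longleftrightarrow> fst (tm_run A x k) \<in> tm_final A"

definition tm_computes :: "('q, 'g, 'a) tm \<Rightarrow> ('a list \<Rightarrow> 'a list) \<Rightarrow> bool" where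
  "tm_computes A f \<longleftrightarrow> (\<forall>x. \<exists>k. tm_halted A x k \<and>
      tape_holds (tm_blank A) (tm_emb A) (fst (snd (tm_run A x k))) (f x))"

definition tm_time :: "('q, 'g, 'a) tm \<Rightarrow> 'a list \<Rightarrow> nat" where
  "tm_time A x = snd (snd (snd (tm_run A x (LEAST k. tm_halted A x k))))"

definition bigO_measure :: "('a list \<Rightarrow> nat) \<Rightarrow> (nat \<Rightarrow> nat) \<Rightarrow> bool" where
  "bigO_measure m T \<longleftrightarrow> (\<exists>c N. \<forall>x. length x \<ge> N \<longrightarrow> m x \<le> c * T (length x))"

definition tm_computes_in_time :: "('q, 'g, 'a) tm \<Rightarrow> ('a list \<Rightarrow> 'a list) \<Rightarrow> (nat \<Rightarrow> nat) \<Rightarrow> bool" where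
  "tm_computes_in_time A f T \<longleftrightarrow> tm_wf A \<and> tm_computes A f \<and> bigO_measure (tm_time A) T"

datatype kind = Normal | Rd | Wr

text \<open>In a read/write state q the
  machine writes the new address addr' = addr + tl_off q on the address tape, performs the
  IO operation, and then goes to state fst (tl_next A q) moving the main-memory head by
  snd (tl_next A q).\<close>
record ('q, 'g, 'a) tlm =
  tl_M      :: nat
  tl_states :: "'q set"
  tl_alpha  :: "'g set"
  tl_start  :: 'q
  tl_final  :: "'q set"
  tl_blank  :: 'g
  tl_emb    :: "'a \<Rightarrow> 'g"
  tl_kind   :: "'q \<Rightarrow> kind"
  tl_delta  :: "'q \<Rightarrow> 'g \<Rightarrow> 'q \<times> 'g \<times> move"
  tl_off    :: "'q \<Rightarrow> int"
  tl_next   :: "'q \<Rightarrow> 'q \<times> move"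

definition tlm_wf :: "('q, 'g, 'a) tlm \<Rightarrow> bool" where
  "tlm_wf A \<longleftrightarrow> 1 \<le> tl_M A \<and> finite (tl_states A) \<and> finite (tl_alpha A)
     \<and> tl_start A \<in> tl_states A \<and> tl_final A \<subseteq> tl_states A
     \<and> tl_blank A \<in> tl_alpha A \<and> range (tl_emb A) \<subseteq> tl_alpha A
     \<and> inj (tl_emb A) \<and> tl_blank A \<notin> range (tl_emb A)
     \<and> (\<forall>q\<in>tl_states A. \<forall>a\<in>tl_alpha A. q \<notin> tl_final A \<longrightarrow> tl_kind A q = Normal \<longrightarrow>
           fst (tl_delta A q a) \<in> tl_states A \<and> fst (snd (tl_delta A q a)) \<in> tl_alpha A)
     \<and> (\<forall>q\<in>tl_states A. q \<notin> tl_final A \<longrightarrow> tl_kind A q \<noteq> Normal \<longrightarrow>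
           fst (tl_next A q) \<in> tl_states A)"

text \<open>Configuration: (state, main memory, main head, external memory, address,
  time (non-IO transitions), IO time).\<close>
type_synonym ('q, 'g) tlm_conf =
  "'q \<times> (nat \<Rightarrow> 'g) \<times> nat \<times> (nat \<Rightarrow> 'g) \<times> nat \<times> nat \<times> nat"

definition mvM :: "nat \<Rightarrow> move \<Rightarrow> nat \<Rightarrow> nat" where
  "mvM M d h = min (M - 1) (mv d h)"

definition tlm_step :: "('q, 'g, 'a) tlm \<Rightarrow> ('q, 'g) tlm_conf \<Rightarrow> ('q, 'g) tlm_conf" where
  "tlm_step A c = (case c of (q, mm, h, ext, addr, t, io) \<Rightarrow>
     if q \<in> tl_final A then c
     else (case tl_kind A q of
        Normal \<Rightarrow> (case tl_delta A q (mm h) of (q', a, d) \<Rightarrow>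
                     (q', mm(h := a), mvM (tl_M A) d h, ext, addr, Suc t, io))
      | Rd \<Rightarrow> (let a' = nat (int addr + tl_off A q) in
                 (case tl_next A q of (q', d) \<Rightarrow>
                   (q', mm(h := ext a'), mvM (tl_M A) d h, ext, a', t, Suc io)))
      | Wr \<Rightarrow> (let a' = nat (int addr + tl_off A q) in
                 (case tl_next A q of (q', d) \<Rightarrow>
                   (q', mm, mvM (tl_M A) d h, ext(a' := mm h), a', t, Suc io)))))"

definition tlm_init :: "('q, 'g, 'a) tlm \<Rightarrow> 'a list \<Rightarrow> ('q, 'g) tlm_conf" where
  "tlm_init A x = (tl_start A, (\<lambda>_. tl_blank A), 0,
                   input_tape (tl_blank A) (tl_emb A) x, 0, 0, 0)"

definition tlm_run :: "('q, 'g, 'a) tlm \<Rightarrow> 'a list \<Rightarrow> nat \<Rightarrow> ('q, 'g) tlm_conf" where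
  "tlm_run A x k = (tlm_step A ^^ k) (tlm_init A x)"

definition tlm_halted :: "('q, 'g, 'a) tlm \<Rightarrow> 'a list \<Rightarrow> nat \<Rightarrow> bool" where
  "tlm_halted A x k \<longleftrightarrow> fst (tlm_run A x k) \<in> tl_final A"

definition tlm_ext :: "('q, 'g) tlm_conf \<Rightarrow> nat \<Rightarrow> 'g" where
  "tlm_ext c = fst (snd (snd (snd c)))"

definition tlm_computes :: "('q, 'g, 'a) tlm \<Rightarrow> ('a list \<Rightarrow> 'a list) \<Rightarrow> bool" where
  "tlm_computes A f \<longleftrightarrow> (\<forall>x. \<exists>k. tlm_halted A x k \<and>
      tape_holds (tl_blank A) (tl_emb A) (tlm_ext (tlm_run A x k)) (f x))"

definition tlm_time :: "('q, 'g, 'a) tlm \<Rightarrow> 'a list \<Rightarrow> nat" where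
  "tlm_time A x = fst (snd (snd (snd (snd (snd (tlm_run A x (LEAST k. tlm_halted A x k)))))))"

definition tlm_io :: "('q, 'g, 'a) tlm \<Rightarrow> 'a list \<Rightarrow> nat" where
  "tlm_io A x = snd (snd (snd (snd (snd (snd (tlm_run A x (LEAST k. tlm_halted A x k)))))))"

definition tlm_computes_in :: "('q, 'g, 'a) tlm \<Rightarrow> ('a list \<Rightarrow> 'a list)
     \<Rightarrow> (nat \<Rightarrow> nat) \<Rightarrow> (nat \<Rightarrow> nat) \<Rightarrow> bool" where
  "tlm_computes_in A f T IO \<longleftrightarrow> tlm_wf A \<and> tlm_computes A f
     \<and> bigO_measure (tlm_time A) T \<and> bigO_measure (tlm_io A) IO"

end

theory Submission
  imports Defs "HOL-Library.Countable"
begin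

instance move :: countable by countable_datatype

definition mvo :: "move \<Rightarrow> int" where
  "mvo d = (case d of L \<Rightarrow> -1 | S \<Rightarrow> 0 | R \<Rightarrow> 1)"

lemma mvo_mv: "nat (int h + mvo d) = mv d h"
  by (cases d) (auto simp: mvo_def)

definition simB :: "('q::finite, 'g::finite, 'a) tm \<Rightarrow> (nat, nat, 'a) tlm" where
  "simB A = \<lparr> tl_M = 1,
     tl_states = (\<lambda>(t,q,d). to_nat (t::nat, q::'q::finite, d::move)) ` ({0,1,2} \<times> UNIV \<times> UNIV),
     tl_alpha = range (to_nat :: 'g::finite \<Rightarrow> nat),
     tl_start = to_nat (0::nat, tm_start A, S),
     tl_final = (\<lambda>(q,d). to_nat (0::nat, q, d::move)) ` (tm_final A \<times> UNIV),
     tl_blank = to_nat (tm_blank A),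
     tl_emb = to_nat \<circ> tm_emb A,
     tl_kind = (\<lambda>n. case (from_nat n :: nat \<times> 'q::finite \<times> move) of (t,_,_) \<Rightarrow>
                  if t = 0 then Rd else if t = 1 then Normal else Wr),
     tl_delta = (\<lambda>n a. case (from_nat n :: nat \<times> 'q::finite \<times> move) of (_,q,_) \<Rightarrow>
                  (case tm_delta A q (from_nat a) of (q',b,d) \<Rightarrow> (to_nat (2::nat,q',d), to_nat b, S))),
     tl_off = (\<lambda>n. case (from_nat n :: nat \<times> 'q::finite \<times> move) of (t,_,d) \<Rightarrow> if t = 0 then mvo d else 0),
     tl_next = (\<lambda>n. case (from_nat n :: nat \<times> 'q::finite \<times> move) of (t,q,d) \<Rightarrow>
                  if t = 0 then (to_nat (1::nat,q,d), S) else (to_nat (0::nat,q,d), S)) \<rparr>"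

context
  fixes A :: "('q::finite, 'g::finite, 'a) tm"
begin

lemma simB_M [simp]: "tl_M (simB A) = 1" by (simp add: simB_def)

lemma simB_kind [simp]:
  "tl_kind (simB A) (to_nat (t::nat, q::'q, d::move)) = (if t = 0 then Rd else if t = 1 then Normal else Wr)"
  by (simp add: simB_def)

lemma simB_delta [simp]:
  "tl_delta (simB A) (to_nat (t::nat, q::'q, d::move)) a =
     (case tm_delta A q (from_nat a) of (q',b,d) \<Rightarrow> (to_nat (2::nat,q',d), to_nat b, S))"
  by (simp add: simB_def)

lemma simB_off [simp]:
  "tl_off (simB A) (to_nat (t::nat, q::'q, d::move)) = (if t = 0 then mvo d else 0)"
  by (simp add: simB_def)

lemma simB_next [simp]:
  "tl_next (simB A) (to_nat (t::nat, q::'q, d::move)) =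
     (if t = 0 then (to_nat (1::nat,q,d), S) else (to_nat (0::nat,q,d), S))"
  by (simp add: simB_def)

lemma simB_final_iff [simp]:
  "to_nat (t::nat, q::'q, d::move) \<in> tl_final (simB A) \<longleftrightarrow> t = 0 \<and> q \<in> tm_final A"
  by (auto simp: simB_def)

lemma step_R:
  "q \<notin> tm_final A \<Longrightarrow> tlm_step (simB A) (to_nat (0::nat,q::'q,d::move), mm, 0, ext, addr, t, io)
    = (to_nat (Suc 0,q,d), mm(0 := ext (mv d addr)), 0, ext, mv d addr, t, Suc io)"
  by (simp add: tlm_step_def mvo_mv mvM_def Let_def)

lemma step_N:
  "tm_delta A q (from_nat (mm 0)) = (q', b, d') \<Longrightarrow>
   tlm_step (simB A) (to_nat (Suc 0,q::'q,d::move), mm, 0, ext, addr, t, io)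
    = (to_nat (2::nat,q',d'), mm(0 := to_nat b), 0, ext, addr, Suc t, io)"
  by (simp add: tlm_step_def mvM_def)

lemma step_W:
  "tlm_step (simB A) (to_nat (Suc (Suc 0),q::'q,d::move), mm, 0, ext, addr, t, io)
    = (to_nat (0::nat,q,d), mm, 0, ext(addr := mm 0), addr, t, Suc io)"
  by (simp add: tlm_step_def mvM_def)

lemma sim_step3:
  assumes "q \<notin> tm_final A"
    and "tm_delta A q (tp (mv d addr)) = (q', b, d')"
  shows "(tlm_step (simB A) ^^ 3) (to_nat (0::nat,q,d), mm, 0, to_nat \<circ> tp, addr, t, io)
     = (to_nat (0::nat,q',d'), (mm(0 := to_nat (tp (mv d addr))))(0 := to_nat b), 0, to_nat \<circ> (tp(mv d addr := b)), mv d addr, Suc t, Suc (Suc io))"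
    "fst (tlm_step (simB A) (to_nat (0::nat,q,d), mm, 0, to_nat \<circ> tp, addr, t, io)) \<notin> tl_final (simB A)"
    "fst ((tlm_step (simB A) ^^ 2) (to_nat (0::nat,q,d), mm, 0, to_nat \<circ> tp, addr, t, io)) \<notin> tl_final (simB A)"
  using assms
  by (simp_all add: numeral_3_eq_3 numeral_2_eq_2 step_R step_N step_W fun_upd_comp)

lemma tlm_final_fix: "fst c \<in> tl_final B \<Longrightarrow> (tlm_step B ^^ n) c = c"
  by (induction n) (auto simp: tlm_step_def split: prod.splits)

lemma tm_run_Suc: "tm_run A x (Suc k) = tm_step A (tm_run A x k)"
  by (simp add: tm_run_def)

lemma tlm_run_add: "tlm_run B x (m + n) = (tlm_step B ^^ m) (tlm_run B x n)"
  by (simp add: tlm_run_def funpow_add)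

lemma tlm_run_Suc: "tlm_run B x (Suc n) = tlm_step B (tlm_run B x n)"
  by (simp add: tlm_run_def)

lemma sim_run:
  "\<exists>d addr mm. tlm_run (simB A) x (3*k) =
     (to_nat (0::nat, fst (tm_run A x k), d), mm, 0, to_nat \<circ> fst (snd (tm_run A x k)), addr,
      snd (snd (snd (tm_run A x k))), 2 * snd (snd (snd (tm_run A x k))))
    \<and> mv d addr = fst (snd (snd (tm_run A x k)))"
proof (induction k)
  case 0
  have "input_tape (to_nat (tm_blank A)) (to_nat \<circ> tm_emb A) x = to_nat \<circ> input_tape (tm_blank A) (tm_emb A) x"
    by (auto simp: input_tape_def fun_eq_iff)
  then show ?case
    by (auto simp: tlm_run_def tm_run_def tlm_init_def tm_init_def simB_def)
next
  case (Suc k)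
  obtain q tp h t where r: "tm_run A x k = (q, tp, h, t)" by (cases "tm_run A x k") auto
  from Suc obtain d addr mm where
    e: "tlm_run (simB A) x (3*k) = (to_nat (0::nat, q, d), mm, 0, to_nat \<circ> tp, addr, t, 2 * t)"
    and h: "mv d addr = h" using Suc.IH unfolding r fst_conv snd_conv by blast
  have 3: "3 * Suc k = 3 + 3 * k" by simp
  show ?case
  proof (cases "q \<in> tm_final A")
    case True
    then have "tm_run A x (Suc k) = tm_run A x k" by (simp add: tm_run_Suc r tm_step_def)
    moreover have "tlm_run (simB A) x (3 * Suc k) = tlm_run (simB A) x (3*k)"
      unfolding 3 tlm_run_add by (rule tlm_final_fix) (simp add: e True)
    ultimately show ?thesis using e h r by auto
  next
    case False
    obtain q' b d' where dl: "tm_delta A q (tp h) = (q', b, d')" by (cases "tm_delta A q (tp h)") auto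
    have tm: "tm_run A x (Suc k) = (q', tp(h := b), mv d' h, Suc t)"
      by (simp add: tm_run_Suc r tm_step_def False dl)
    have "tlm_run (simB A) x (3 * Suc k) = (to_nat (0::nat,q',d'), (mm(0 := to_nat (tp (mv d addr))))(0 := to_nat b), 0, to_nat \<circ> (tp(mv d addr := b)), mv d addr, Suc t, Suc (Suc (2*t)))"
      unfolding 3 tlm_run_add e by (rule sim_step3(1)) (use False dl h in auto)
    then show ?thesis using tm h by auto
  qed
qed

lemma sim_halted: "tlm_halted (simB A) x (3*k) \<longleftrightarrow> tm_halted A x k"
  using sim_run[of x k] by (auto simp: tlm_halted_def tm_halted_def)

lemma sim_not_halted:
  assumes "\<not> tm_halted A x i" and "r < 3"
  shows "\<not> tlm_halted (simB A) x (r + 3*i)"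
proof -
  obtain q tp h t where rr: "tm_run A x i = (q, tp, h, t)" by (cases "tm_run A x i") auto
  from sim_run[of x i] obtain d addr mm where
    e: "tlm_run (simB A) x (3*i) = (to_nat (0::nat, q, d::move), mm, 0, to_nat \<circ> tp, addr, t, 2 * t)"
    unfolding rr fst_conv snd_conv by blast
  have nf: "q \<notin> tm_final A" using assms(1) rr by (simp add: tm_halted_def)
  obtain q' b d' where dl: "tm_delta A q (tp (mv d addr)) = (q', b, d')" by (cases "tm_delta A q (tp (mv d addr))") auto
  have "r = 0 \<or> r = 1 \<or> r = 2" using assms(2) by auto
  then show ?thesis
  proof (elim disjE)
    assume "r = 0" then show ?thesis using nf e by (simp add: tlm_halted_def)
  next
    assume "r = 1" then show ?thesis using sim_step3(2)[where tp=tp and d=d and addr=addr, OF nf dl, of mm t "2*t"] e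
      by (simp add: tlm_halted_def tlm_run_Suc numeral_2_eq_2)
  next
    assume "r = 2" then show ?thesis using sim_step3(3)[where tp=tp and d=d and addr=addr, OF nf dl, of mm t "2*t"] e
      by (simp add: tlm_halted_def tlm_run_Suc numeral_2_eq_2)
  qed
qed

lemma sim_least:
  assumes "\<exists>k. tm_halted A x k"
  shows "(LEAST j. tlm_halted (simB A) x j) = 3 * (LEAST k. tm_halted A x k)"
proof (rule Least_equality)
  show "tlm_halted (simB A) x (3 * (LEAST k. tm_halted A x k))"
    using sim_halted LeastI_ex[OF assms] by blast
next
  fix j assume hj: "tlm_halted (simB A) x j"
  show "3 * (LEAST k. tm_halted A x k) \<le> j"
  proof (rule ccontr)
    assume "\<not> ?thesis"
    then have lt: "j div 3 < (LEAST k. tm_halted A x k)" by auto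
    have "\<not> tm_halted A x (j div 3)" using not_less_Least[OF lt] .
    from sim_not_halted[OF this, of "j mod 3"] have "\<not> tlm_halted (simB A) x (j mod 3 + 3 * (j div 3))" by simp
    then show False using hj by simp
  qed
qed

lemma finite_move: "finite (UNIV :: move set)"
proof -
  have eq: "(UNIV :: move set) = {L, S, R}" by (rule set_eqI, case_tac x, auto)
  show ?thesis by (simp only: eq finite_insert finite.emptyI)
qed

lemma finite_qm: "finite (UNIV :: ('q \<times> move) set)"
proof -
  have "finite ((UNIV :: 'q set) \<times> (UNIV :: move set))"
    using finite_move by (intro finite_cartesian_product) auto
  then show ?thesis by simp
qed

lemma simB_wf: "tm_wf A \<Longrightarrow> tlm_wf (simB A)"
  unfolding tlm_wf_def by (auto simp: tm_wf_def simB_def finite_move finite_qm inj_def split: prod.splits)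

end

theorem theorem1:
  fixes f :: "'a list \<Rightarrow> 'a list" and T :: "nat \<Rightarrow> nat"
    and A :: "('q::finite, 'g::finite, 'a) tm"
  assumes "tm_computes_in_time A f T"
  shows "\<exists>B :: (nat, nat, 'a) tlm. tlm_computes_in B f T T"
proof -
  from assms have wf: "tm_wf A" and comp: "tm_computes A f" and bo: "bigO_measure (tm_time A) T"
    by (auto simp: tm_computes_in_time_def)
  have ex: "\<exists>k. tm_halted A x k" for x using comp by (auto simp: tm_computes_def)
  have time: "tlm_time (simB A) x = tm_time A x" and io: "tlm_io (simB A) x = 2 * tm_time A x" for x
    unfolding tlm_time_def tlm_io_def tm_time_def sim_least[OF ex]
    using sim_run[of A x "LEAST k. tm_halted A x k"] by auto
  have "tlm_computes (simB A) f"
    unfolding tlm_computes_def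
  proof
    fix x
    from comp obtain k where hk: "tm_halted A x k"
      and th: "tape_holds (tm_blank A) (tm_emb A) (fst (snd (tm_run A x k))) (f x)"
      by (auto simp: tm_computes_def)
    have "tlm_halted (simB A) x (3*k)" using hk sim_halted by blast
    moreover have "tape_holds (tl_blank (simB A)) (tl_emb (simB A)) (tlm_ext (tlm_run (simB A) x (3*k))) (f x)"
      using sim_run[of A x k] th by (auto simp: tape_holds_def tlm_ext_def simB_def)
    ultimately show "\<exists>k. tlm_halted (simB A) x k \<and> tape_holds (tl_blank (simB A)) (tl_emb (simB A)) (tlm_ext (tlm_run (simB A) x k)) (f x)"
      by blast
  qed
  moreover from bo obtain c N where cN: "\<And>x. length x \<ge> N \<Longrightarrow> tm_time A x \<le> c * T (length x)"
    by (auto simp: bigO_measure_def)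
  have "bigO_measure (tlm_time (simB A)) T"
    unfolding bigO_measure_def time using cN by blast
  moreover have "bigO_measure (tlm_io (simB A)) T"
    unfolding bigO_measure_def io
  proof (intro exI allI impI)
    fix x :: "'a list" assume "N \<le> length x"
    then show "2 * tm_time A x \<le> (2 * c) * T (length x)" using cN by fastforce
  qed
  ultimately show ?thesis using simB_wf[OF wf] unfolding tlm_computes_in_def by blast
qed

end
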